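(* Let $n\geq 1$. The map $\Gamma$, sending a cell $\langle c^m,c^M\rangle$ of size $n$ to the $(n-1)$-tuple $(\gamma(c^m_1,c^M_1),\dots,\gamma(c^m_{n-1},c^M_{n-1}))$, where $\gamma(a,b)=a$ if $a<0$ and $\gamma(a,b)=b$ if $a\geq 0$, is a bijection from the set of cells of size $n$ to the set $\mathcal{CC}^{sync}_n$ of synchronized cubic coordinates of size $n$.
   Context: A Tamari diagram of size $n$ is a word $u=u_1\cdots u_n$ of integers with $0\leq u_i\leq n-i$ and $u_{i+j}\leq u_i-j$ for all $i\in[n]$, $0\leq j\leq u_i$. A dual Tamari diagram of size $n$ is a word $v$ of integers with $0\leq v_i\leq i-1$ and $v_{i-j}\leq v_i-j$ for all $i\in[n]$, $0\leq j\leq v_i$. $(u,v)$ is a Tamari interval diagram if moreover for all $1\leq i<j\leq n$ with $j-i\leq u_i$ one has $v_j<j-i$. A cubic coordinate of size $n$ is $c\in\mathbb{Z}^{n-1}$ such that $(u,v)$ with $u_i=\max(c_i,0)$ ($i\in[n-1]$), $u_n=0$, $v_1=0$, $v_i=|\min(c_{i-1},0)|$ ($2\leq i\leq n$) is a Tamari interval diagram; $\mathcal{CC}_n$ denotes their set. A cubic coordinate is synchronized if all its entries are nonzero. For $c\in\mathcal{CC}_n$ and $i\in[n-1]$, the minimal increase $\uparrow_i(c)$ is defined when there exists a cubic coordinate agreeing with $c$ outside position $i$ and with $i$-th entry $>c_i$; then $\uparrow_i(c)$ is the tuple obtained from $c$ by replacing $c_i$ by the smallest integer $t>c_i$ such that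 the result is a cubic coordinate (equivalently, $\uparrow_i(c)$ covers $c$ in the componentwise order on $\mathcal{CC}_n$ and differs from $c$ only at position $i$). $c$ is minimal-cellular if $\uparrow_i(c)$ is defined for every $i\in[n-1]$. For minimal-cellular $c^m$, its maximal-cellular correspondent is $c^M=\uparrow_1(\uparrow_2(\cdots(\uparrow_{n-1}(c^m))\cdots))$ (every step of this composition is defined), and the pair $\langle c^m,c^M\rangle$ is a cell of size $n$. *)

theory Defs
  imports Main
begin

text \<open>Words are int lists; the paper's 1-based entry w_i is w ! (i - 1).\<close>

definition tamari_diagram :: "nat \<Rightarrow> int list \<Rightarrow> bool" where
  "tamari_diagram n u \<longleftrightarrow> length u = n \<and>
     (\<forall>i\<in>{1..n}. 0 \<le> u ! (i - 1) \<and> u ! (i - 1) \<le> int n - int i) \<and>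
     (\<forall>i\<in>{1..n}. \<forall>j::nat. int j \<le> u ! (i - 1) \<longrightarrow>
        u ! (i + j - 1) \<le> u ! (i - 1) - int j)"

definition dual_tamari_diagram :: "nat \<Rightarrow> int list \<Rightarrow> bool" where
  "dual_tamari_diagram n v \<longleftrightarrow> length v = n \<and>
     (\<forall>i\<in>{1..n}. 0 \<le> v ! (i - 1) \<and> v ! (i - 1) \<le> int i - 1) \<and>
     (\<forall>i\<in>{1..n}. \<forall>j::nat. int j \<le> v ! (i - 1) \<longrightarrow>
        v ! (i - j - 1) \<le> v ! (i - 1) - int j)"

definition tamari_interval_diagram :: "nat \<Rightarrow> int list \<Rightarrow> int list \<Rightarrow> bool" where
  "tamari_interval_diagram n u v \<longleftrightarrow> tamari_diagram n u \<and> dual_tamari_diagram n v \<and>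
     (\<forall>i j. 1 \<le> i \<and> i < j \<and> j \<le> n \<and> int (j - i) \<le> u ! (i - 1) \<longrightarrow>
        v ! (j - 1) < int (j - i))"

definition cc_u :: "int list \<Rightarrow> int list" where
  "cc_u c = map (\<lambda>x. max x 0) c @ [0]"

definition cc_v :: "int list \<Rightarrow> int list" where
  "cc_v c = 0 # map (\<lambda>x. \<bar>min x 0\<bar>) c"

definition CC :: "nat \<Rightarrow> int list set" where
  "CC n = {c. length c = n - 1 \<and> tamari_interval_diagram n (cc_u c) (cc_v c)}"

definition synchronized :: "int list \<Rightarrow> bool" where
  "synchronized c \<longleftrightarrow> (\<forall>x\<in>set c. x \<noteq> 0)"

definition CC_sync :: "nat \<Rightarrow> int list set" where
  "CC_sync n = {c \<in> CC n. synchronized c}"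

definition up_defined :: "nat \<Rightarrow> nat \<Rightarrow> int list \<Rightarrow> bool" where
  "up_defined n i c \<longleftrightarrow> (\<exists>t. t > c ! (i - 1) \<and> c[i - 1 := t] \<in> CC n)"

definition min_increase :: "nat \<Rightarrow> nat \<Rightarrow> int list \<Rightarrow> int list" where
  "min_increase n i c = c[i - 1 := (LEAST t. t > c ! (i - 1) \<and> c[i - 1 := t] \<in> CC n)]"

definition minimal_cellular :: "nat \<Rightarrow> int list \<Rightarrow> bool" where
  "minimal_cellular n c \<longleftrightarrow> c \<in> CC n \<and> (\<forall>i\<in>{1..n - 1}. up_defined n i c)"

text \<open>c^M = up_1 (up_2 ( ... (up_{n-1} c^m)...)).\<close>
definition max_correspondent :: "nat \<Rightarrow> int list \<Rightarrow> int list" where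
  "max_correspondent n c = foldr (min_increase n) [1..<n] c"

definition cells :: "nat \<Rightarrow> (int list \<times> int list) set" where
  "cells n = {(cm, max_correspondent n cm) | cm. minimal_cellular n cm}"

definition gamma :: "int \<Rightarrow> int \<Rightarrow> int" where
  "gamma a b = (if a < 0 then a else b)"

definition Gamma :: "int list \<times> int list \<Rightarrow> int list" where
  "Gamma p = map2 gamma (fst p) (snd p)"

end

theory Submission
  imports Defs
begin


definition P :: "int list \<Rightarrow> nat \<Rightarrow> int" where
  "P c i = (if 1 \<le> i \<and> i \<le> length c then max (c!(i-1)) 0 else 0)"
definition Q :: "int list \<Rightarrow> nat \<Rightarrow> int" where
  "Q c i = (if 1 \<le> i \<and> i \<le> length c then max (- c!(i-1)) 0 else 0)"
definition R :: "int list \<Rightarrow> nat \<Rightarrow> int" where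
  "R c i = int i + P c i"
definition L :: "int list \<Rightarrow> nat \<Rightarrow> int" where
  "L c i = int i - Q c i"

definition ARC :: "nat \<Rightarrow> int list \<Rightarrow> bool" where
  "ARC n c \<longleftrightarrow>
 (\<forall>i. 1 \<le> i \<and> i < n \<longrightarrow> int i + P c i \<le> int n \<and> Q c i \<le> int i) \<and>
 (\<forall>i k. 1 \<le> i \<and> i < k \<and> k < n \<and> int k \<le> R c i \<longrightarrow> R c k \<le> R c i) \<and>
 (\<forall>i k. 1 \<le> k \<and> k < i \<and> i < n \<and> L c i \<le> int k \<longrightarrow> L c i \<le> L c k) \<and>
 (\<forall>i k. 1 \<le> i \<and> i < k \<and> k < n \<and> int k < R c i \<longrightarrow> int i \<le> L c k)"

lemma P_ge0: "P c i \<ge> 0" by (simp add: P_def)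
lemma Q_ge0: "Q c i \<ge> 0" by (simp add: Q_def)
lemma PQ: "P c i = 0 \<or> Q c i = 0" by (auto simp: P_def Q_def)

lemma u_nth:
  assumes "length c = n - 1" "n \<ge> 1" "1 \<le> i" "i \<le> n"
  shows "cc_u c ! (i-1) = P c i"
proof (cases "i = n")
  case True
  then show ?thesis using assms by (auto simp: cc_u_def P_def nth_append)
next
  case False
  then show ?thesis using assms by (simp add: cc_u_def P_def nth_append)
qed

lemma v_nth:
  assumes "length c = n - 1" "i < n"
  shows "cc_v c ! i = Q c i"
proof (cases i)
  case 0
  then show ?thesis by (simp add: cc_v_def Q_def)
next
  case (Suc k)
  then show ?thesis using assms by (auto simp: cc_v_def Q_def)
qed

lemma len_u: "length c = n - 1 \<Longrightarrow> n \<ge> 1 \<Longrightarrow> length (cc_u c) = n"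
  by (simp add: cc_u_def)
lemma len_v: "length c = n - 1 \<Longrightarrow> n \<ge> 1 \<Longrightarrow> length (cc_v c) = n"
  by (simp add: cc_v_def)

lemma P_out: "i \<ge> n \<Longrightarrow> length c = n - 1 \<Longrightarrow> P c i = 0"
  unfolding P_def by auto
lemma Q_out: "i \<ge> n \<Longrightarrow> length c = n - 1 \<Longrightarrow> Q c i = 0"
  unfolding Q_def by auto
lemma Q_0: "Q c 0 = 0" by (simp add: Q_def)

lemma CC_imp_ARC:
  assumes n: "n \<ge> 1" and cc: "c \<in> CC n"
  shows "length c = n - 1 \<and> ARC n c"
proof -
  have len: "length c = n - 1" using cc by (simp add: CC_def)
  have T: "tamari_diagram n (cc_u c)" and DT: "dual_tamari_diagram n (cc_v c)"
    and I: "\<forall>i j. 1 \<le> i \<and> i < j \<and> j \<le> n \<and> int (j - i) \<le> cc_u c ! (i - 1) \<longrightarrow>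
        cc_v c ! (j - 1) < int (j - i)"
    using cc by (auto simp: CC_def tamari_interval_diagram_def)
  have T1: "\<And>i. 1 \<le> i \<Longrightarrow> i \<le> n \<Longrightarrow> P c i \<le> int n - int i"
    using T u_nth[OF len n] by (auto simp: tamari_diagram_def)
  have T2: "\<And>i j. 1 \<le> i \<Longrightarrow> i \<le> n \<Longrightarrow> int j \<le> P c i \<Longrightarrow> cc_u c ! (i + j - 1) \<le> P c i - int j"
    using T u_nth[OF len n] by (auto simp: tamari_diagram_def)
  have D1: "\<And>i. 1 \<le> i \<Longrightarrow> i \<le> n \<Longrightarrow> Q c (i-1) \<le> int i - 1"
  proof -
    fix i
    assume i: "1 \<le> i" "i \<le> n"
    have "\<forall>i\<in>{1..n}. 0 \<le> cc_v c ! (i - 1) \<and> cc_v c ! (i - 1) \<le> int i - 1"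
      using DT by (simp add: dual_tamari_diagram_def)
    then have "cc_v c ! (i - 1) \<le> int i - 1" using i by auto
    then show "Q c (i-1) \<le> int i - 1" using v_nth[OF len, of "i-1"] i by simp
  qed
  have D2: "\<And>i j. 1 \<le> i \<Longrightarrow> i \<le> n \<Longrightarrow> int j \<le> Q c (i-1) \<Longrightarrow> cc_v c ! (i - j - 1) \<le> Q c (i-1) - int j"
  proof -
    fix i j assume i: "1 \<le> i" "i \<le> n" "int j \<le> Q c (i-1)"
    have "\<forall>i\<in>{1..n}. \<forall>j::nat. int j \<le> cc_v c ! (i - 1) \<longrightarrow>
        cc_v c ! (i - j - 1) \<le> cc_v c ! (i - 1) - int j"
      using DT by (simp add: dual_tamari_diagram_def)
    then have "int j \<le> cc_v c ! (i - 1) \<longrightarrow>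
        cc_v c ! (i - j - 1) \<le> cc_v c ! (i - 1) - int j" using i(1,2) by auto
    moreover have "cc_v c ! (i - 1) = Q c (i-1)" using v_nth[OF len, of "i-1"] i by simp
    ultimately show "cc_v c ! (i - j - 1) \<le> Q c (i-1) - int j"
      using i(3) by simp
  qed
  have A: "\<forall>i. 1 \<le> i \<and> i < n \<longrightarrow> int i + P c i \<le> int n \<and> Q c i \<le> int i"
  proof (intro allI impI)
    fix i assume i: "1 \<le> i \<and> i < n"
    have "P c i \<le> int n - int i" using T1 i by auto
    moreover have "Q c (Suc i - 1) \<le> int (Suc i) - 1" using D1[of "Suc i"] i by auto
    ultimately show "int i + P c i \<le> int n \<and> Q c i \<le> int i" by simp
  qed
  have B: "\<forall>i k. 1 \<le> i \<and> i < k \<and> k < n \<and> int k \<le> R c i \<longrightarrow> R c k \<le> R c i"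
  proof (intro allI impI)
    fix i k assume h: "1 \<le> i \<and> i < k \<and> k < n \<and> int k \<le> R c i"
    have "cc_u c ! (i + (k-i) - 1) \<le> P c i - int (k-i)"
      using T2[of i "k-i"] h by (simp add: R_def)
    moreover have "i + (k - i) - 1 = k - 1" using h by simp
    ultimately have "P c k \<le> P c i - int (k-i)" using u_nth[OF len n, of k] h by simp
    then show "R c k \<le> R c i" using h by (simp add: R_def)
  qed
  have C: "\<forall>i k. 1 \<le> k \<and> k < i \<and> i < n \<and> L c i \<le> int k \<longrightarrow> L c i \<le> L c k"
  proof (intro allI impI)
    fix i k assume h: "1 \<le> k \<and> k < i \<and> i < n \<and> L c i \<le> int k"
    have "cc_v c ! (Suc i - (i-k) - 1) \<le> Q c (Suc i - 1) - int (i-k)"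
      using D2[of "Suc i" "i-k"] h by (simp add: L_def)
    moreover have "Suc i - (i-k) - 1 = k" using h by simp
    ultimately have "Q c k \<le> Q c i - int (i-k)" using v_nth[OF len, of k] h by simp
    then show "L c i \<le> L c k" using h by (simp add: L_def)
  qed
  have D: "\<forall>i k. 1 \<le> i \<and> i < k \<and> k < n \<and> int k < R c i \<longrightarrow> int i \<le> L c k"
  proof (intro allI impI)
    fix i k assume h: "1 \<le> i \<and> i < k \<and> k < n \<and> int k < R c i"
    have "cc_v c ! (Suc k - 1) < int (Suc k - i)"
      using I[rule_format, of i "Suc k"] h u_nth[OF len n, of i] by (simp add: R_def)
    then have "Q c k < int (Suc k - i)" using v_nth[OF len, of k] h by simp
    then show "int i \<le> L c k" using h by (simp add: L_def)
  qed
  show ?thesis using len A B C D by (simp add: ARC_def)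
qed

lemma ARC_imp_CC:
  assumes n: "n \<ge> 1" and len: "length c = n - 1" and arc: "ARC n c"
  shows "c \<in> CC n"
proof -
  have A: "\<And>i. 1 \<le> i \<Longrightarrow> i < n \<Longrightarrow> int i + P c i \<le> int n \<and> Q c i \<le> int i"
    and B: "\<And>i k. 1 \<le> i \<Longrightarrow> i < k \<Longrightarrow> k < n \<Longrightarrow> int k \<le> R c i \<Longrightarrow> R c k \<le> R c i"
    and C: "\<And>i k. 1 \<le> k \<Longrightarrow> k < i \<Longrightarrow> i < n \<Longrightarrow> L c i \<le> int k \<Longrightarrow> L c i \<le> L c k"
    and D: "\<And>i k. 1 \<le> i \<Longrightarrow> i < k \<Longrightarrow> k < n \<Longrightarrow> int k < R c i \<Longrightarrow> int i \<le> L c k"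
    using arc unfolding ARC_def by blast+
  have un: "\<And>i. 1 \<le> i \<Longrightarrow> i \<le> n \<Longrightarrow> cc_u c ! (i-1) = P c i" using u_nth[OF len n] by blast
  have vn: "\<And>i. i < n \<Longrightarrow> cc_v c ! i = Q c i" using v_nth[OF len] by blast
  have Pn: "P c n = 0" using P_out[OF _ len] by simp
  have Pbound: "\<And>i. 1 \<le> i \<Longrightarrow> i \<le> n \<Longrightarrow> P c i \<le> int n - int i"
  proof -
    fix i assume i: "1 \<le> i" "i \<le> n"
    show "P c i \<le> int n - int i"
    proof (cases "i = n")
      case True then show ?thesis using Pn by simp
    next
      case False then show ?thesis using A[of i] i by simp
    qed
  qed
  have T: "tamari_diagram n (cc_u c)"
    unfolding tamari_diagram_def
  proof (intro conjI ballI allI impI)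
    show "length (cc_u c) = n" using len_u[OF len n] .
  next
    fix i assume "i \<in> {1..n}"
    then show "0 \<le> cc_u c ! (i - 1)" using un P_ge0 by simp
  next
    fix i assume "i \<in> {1..n}"
    then show "cc_u c ! (i - 1) \<le> int n - int i" using un Pbound by simp
  next
    fix i j assume i: "i \<in> {1..n}" and j: "int j \<le> cc_u c ! (i - 1)"
    have ui: "cc_u c ! (i - 1) = P c i" using un i by simp
    show "cc_u c ! (i + j - 1) \<le> cc_u c ! (i - 1) - int j"
    proof (cases "j = 0")
      case True then show ?thesis by simp
    next
      case False
      then have "P c i > 0" using j ui by simp
      then have iln: "i < n" using Pn i by (cases "i = n") auto
      have kn: "i + j \<le> n" using Pbound[of i] i j ui by simp
      show ?thesis
      proof (cases "i + j = n")
        case True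
        then show ?thesis using un[of "i+j"] Pn j ui n by simp
      next
        case False
        then have "R c (i+j) \<le> R c i" using B[of i "i+j"] i kn j ui \<open>j \<noteq> 0\<close> by (simp add: R_def)
        then show ?thesis using un[of "i+j"] kn ui i by (simp add: R_def)
      qed
    qed
  qed
  have DT: "dual_tamari_diagram n (cc_v c)"
    unfolding dual_tamari_diagram_def
  proof (intro conjI ballI allI impI)
    show "length (cc_v c) = n" using len_v[OF len n] .
  next
    fix i assume "i \<in> {1..n}"
    then have "i - 1 < n" by auto
    then show "0 \<le> cc_v c ! (i - 1)" using vn[of "i-1"] Q_ge0[of c "i-1"] by simp
  next
    fix i assume i: "i \<in> {1..n}"
    show "cc_v c ! (i - 1) \<le> int i - 1"
    proof (cases "i = 1")
      case True then show ?thesis using vn Q_0 n by simp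
    next
      case False
      have "1 \<le> i - 1" "i - 1 < n" using i False by auto
      then show ?thesis using A[of "i-1"] vn[of "i-1"] by simp
    qed
  next
    fix i j assume i: "i \<in> {1..n}" and j: "int j \<le> cc_v c ! (i - 1)"
    have ii: "1 \<le> i" "i \<le> n" "i - 1 < n" using i by auto
    have vi: "cc_v c ! (i - 1) = Q c (i-1)" using vn ii by simp
    show "cc_v c ! (i - j - 1) \<le> cc_v c ! (i - 1) - int j"
    proof (cases "j = 0")
      case True then show ?thesis by simp
    next
      case False
      then have Qp: "Q c (i-1) > 0" using j vi by simp
      then have i1: "i - 1 \<ge> 1" using Q_0 by (cases "i - 1 = 0") auto
      have "Q c (i-1) \<le> int (i-1)" using A[of "i-1"] ii i1 by simp
      then have ji: "j \<le> i - 1" using j vi by simp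
      show ?thesis
      proof (cases "i - 1 - j = 0")
        case True
        then have "i - j - 1 = 0" by simp
        then show ?thesis using vn[of 0] Q_0 j vi n ji True ii by simp
      next
        case False
        have "L c (i-1) \<le> L c (i - 1 - j)"
          using C[of "i - 1 - j" "i-1"] False ii j vi ji \<open>j \<noteq> 0\<close> by (simp add: L_def)
        moreover have "i - j - 1 = i - 1 - j" by simp
        ultimately show ?thesis using vn[of "i-1-j"] vi ii ji by (simp add: L_def)
      qed
    qed
  qed
  have I: "\<forall>i j. 1 \<le> i \<and> i < j \<and> j \<le> n \<and> int (j - i) \<le> cc_u c ! (i - 1) \<longrightarrow>
        cc_v c ! (j - 1) < int (j - i)"
  proof (intro allI impI)
    fix i j assume h: "1 \<le> i \<and> i < j \<and> j \<le> n \<and> int (j - i) \<le> cc_u c ! (i - 1)"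
    have ui: "cc_u c ! (i - 1) = P c i" using un h by simp
    have "j - 1 < n" using h by auto
    then have vj: "cc_v c ! (j - 1) = Q c (j-1)" using vn by simp
    show "cc_v c ! (j - 1) < int (j - i)"
    proof (cases "j - 1 = i")
      case True
      have "P c i > 0" using h ui by auto
      then have "Q c i = 0" using PQ[of c i] by auto
      then show ?thesis using True vj h by auto
    next
      case False
      have "int i \<le> L c (j-1)" using D[of i "j-1"] h ui False by (auto simp add: R_def)
      then show ?thesis using vj h by (auto simp add: L_def)
    qed
  qed
  show ?thesis using len T DT I by (simp add: CC_def tamari_interval_diagram_def)
qed

lemma CC_iff: "n \<ge> 1 \<Longrightarrow> c \<in> CC n \<longleftrightarrow> length c = n - 1 \<and> ARC n c"
  using CC_imp_ARC ARC_imp_CC by blast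




lemma P_upd: "1 \<le> i \<Longrightarrow> i \<le> length c \<Longrightarrow> P (c[i-1 := t]) k = (if k = i then max t 0 else P c k)"
  by (auto simp: P_def nth_list_update)
lemma Q_upd: "1 \<le> i \<Longrightarrow> i \<le> length c \<Longrightarrow> Q (c[i-1 := t]) k = (if k = i then max (-t) 0 else Q c k)"
  by (auto simp: Q_def nth_list_update)

definition k0R :: "int list \<Rightarrow> nat \<Rightarrow> nat" where
  "k0R s i = (LEAST k. i < k \<and> int k + P s k = R s i)"
definition k0L :: "int list \<Rightarrow> nat \<Rightarrow> nat" where
  "k0L s i = (GREATEST k. k < i \<and> int k - Q s k = L s i)"
definition lo_at :: "int list \<Rightarrow> nat \<Rightarrow> int" where
  "lo_at s i = (if s!(i-1) < 0 then s!(i-1) else int (k0R s i) - 1 - int i)"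
definition hi_at :: "int list \<Rightarrow> nat \<Rightarrow> int" where
  "hi_at s i = (if s!(i-1) > 0 then s!(i-1) else int (k0L s i) + 1 - int i)"
definition vert :: "int list \<Rightarrow> nat \<Rightarrow> int list" where
  "vert s j = map (\<lambda>k. if k < j then lo_at s k else hi_at s k) [1..<length s + 1]"
definition isvert :: "int list \<Rightarrow> int list \<Rightarrow> bool" where
  "isvert s x \<longleftrightarrow> length x = length s \<and>
     (\<forall>i. 1 \<le> i \<and> i \<le> length s \<longrightarrow> x!(i-1) = lo_at s i \<or> x!(i-1) = hi_at s i)"

locale sctx =
  fixes n :: nat and s :: "int list"
  assumes n1: "n \<ge> 1" and lens: "length s = n - 1" and arc: "ARC n s"
    and sync: "\<And>i. 1 \<le> i \<Longrightarrow> i < n \<Longrightarrow> s!(i-1) \<noteq> 0"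
begin

lemma A: "1 \<le> i \<Longrightarrow> i < n \<Longrightarrow> int i + P s i \<le> int n \<and> Q s i \<le> int i"
  using arc unfolding ARC_def by blast
lemma B: "1 \<le> i \<Longrightarrow> i < k \<Longrightarrow> k < n \<Longrightarrow> int k \<le> R s i \<Longrightarrow> R s k \<le> R s i"
  using arc unfolding ARC_def by blast
lemma C: "1 \<le> k \<Longrightarrow> k < i \<Longrightarrow> i < n \<Longrightarrow> L s i \<le> int k \<Longrightarrow> L s i \<le> L s k"
  using arc unfolding ARC_def by blast
lemma D: "1 \<le> i \<Longrightarrow> i < k \<Longrightarrow> k < n \<Longrightarrow> int k < R s i \<Longrightarrow> int i \<le> L s k"
  using arc unfolding ARC_def by blast

lemma pos_R: "1 \<le> i \<Longrightarrow> i < n \<Longrightarrow> s!(i-1) > 0 \<Longrightarrow> R s i = int i + s!(i-1) \<and> L s i = int i"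
  using lens by (auto simp: R_def L_def P_def Q_def)
lemma neg_L: "1 \<le> i \<Longrightarrow> i < n \<Longrightarrow> s!(i-1) < 0 \<Longrightarrow> L s i = int i + s!(i-1) \<and> R s i = int i"
  using lens by (auto simp: R_def L_def P_def Q_def)

lemma k0R_props:
  assumes i: "1 \<le> i" "i < n" and sp: "s!(i-1) > 0"
  shows "i < k0R s i" "int (k0R s i) + P s (k0R s i) = R s i" "int (k0R s i) \<le> R s i"
    "\<And>k. i < k \<Longrightarrow> k < k0R s i \<Longrightarrow> R s k < int (k0R s i)"
proof -
  define Rn where "Rn = nat (R s i)"
  have Ri: "R s i = int i + s!(i-1)" using pos_R[OF i sp] by simp
  have RnR: "int Rn = R s i" using Ri sp Rn_def by simp
  have "R s i \<le> int n" using A[OF i] by (simp add: R_def)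
  then have Rnn: "Rn \<le> n" using RnR by linarith
  have iRn: "i < Rn" using RnR Ri sp by simp
  have PRn: "P s Rn = 0"
  proof (cases "Rn < n")
    case True
    have "R s Rn \<le> R s i" using B[OF i(1) iRn True] RnR by simp
    then show ?thesis using RnR P_ge0[of s Rn] by (simp add: R_def)
  next
    case False then show ?thesis using P_out[OF _ lens] by simp
  qed
  have ex: "i < Rn \<and> int Rn + P s Rn = R s i" using iRn PRn RnR by simp
  show k1: "i < k0R s i" "int (k0R s i) + P s (k0R s i) = R s i"
    using LeastI[of "\<lambda>k. i < k \<and> int k + P s k = R s i", OF ex] unfolding k0R_def by auto
  have "k0R s i \<le> Rn" using Least_le[of "\<lambda>k. i < k \<and> int k + P s k = R s i", OF ex] unfolding k0R_def by auto
  then show k2: "int (k0R s i) \<le> R s i" using RnR by simp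
  fix k assume k: "i < k" "k < k0R s i"
  have nk: "\<not> (i < k \<and> int k + P s k = R s i)" using not_less_Least[of k] k(2) unfolding k0R_def by blast
  have kn: "k < n" using k k2 Rnn RnR by simp
  have "R s k \<le> R s i" using B[OF i(1) k(1) kn] k k2 by simp
  then have Rk: "R s k < R s i" using nk k by (simp add: R_def)
  show "R s k < int (k0R s i)"
  proof (rule ccontr)
    assume "\<not> ?thesis"
    then have ge: "int (k0R s i) \<le> R s k" by simp
    show False
    proof (cases "k0R s i < n")
      case True
      have "R s (k0R s i) \<le> R s k" using B[of k "k0R s i"] k i ge True by simp
      then show False using k1 Rk by (simp add: R_def)
    next
      case False
      then show False using ge Rk A[OF i] k2 by (simp add: R_def)
    qed
  qed
qed

lemma k0L_props:
  assumes i: "1 \<le> i" "i < n" and sn: "s!(i-1) < 0"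
  shows "k0L s i < i" "int (k0L s i) - Q s (k0L s i) = L s i" "L s i \<le> int (k0L s i)"
    "\<And>k. k0L s i < k \<Longrightarrow> k < i \<Longrightarrow> int (k0L s i) < L s k"
proof -
  define Ln where "Ln = nat (L s i)"
  have Li: "L s i = int i + s!(i-1)" using neg_L[OF i sn] by simp
  have "Q s i \<le> int i" using A[OF i] by simp
  then have L0: "0 \<le> L s i" by (simp add: L_def)
  have LnL: "int Ln = L s i" using L0 Ln_def by simp
  have Lni: "Ln < i" using LnL Li sn by simp
  have QLn: "Q s Ln = 0"
  proof (cases "Ln = 0")
    case False
    have "L s i \<le> L s Ln" using C[of Ln i] False Lni i LnL by simp
    then show ?thesis using LnL Q_ge0[of s Ln] by (simp add: L_def)
  next
    case True then show ?thesis using Q_0 by simp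
  qed
  let ?P = "\<lambda>k. k < i \<and> int k - Q s k = L s i"
  have ex: "?P Ln" using Lni QLn LnL by simp
  have bd: "\<And>y. ?P y \<Longrightarrow> y \<le> i" by simp
  show k1: "k0L s i < i" "int (k0L s i) - Q s (k0L s i) = L s i"
    using GreatestI_nat[of ?P Ln i, OF ex bd] unfolding k0L_def by auto
  have "Ln \<le> k0L s i" using Greatest_le_nat[of ?P Ln i, OF ex bd] unfolding k0L_def by auto
  then show k2: "L s i \<le> int (k0L s i)" using LnL by simp
  fix k assume k: "k0L s i < k" "k < i"
  have nk: "\<not> ?P k"
  proof
    assume "?P k"
    then have "k \<le> k0L s i" using Greatest_le_nat[of ?P k i] bd unfolding k0L_def by blast
    then show False using k by simp
  qed
  have k1': "1 \<le> k" using k by simp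
  have "L s i \<le> L s k" using C[OF k1' k(2) i(2)] k k2 by simp
  then have Lk: "L s i < L s k" using nk k by (simp add: L_def)
  show "int (k0L s i) < L s k"
  proof (rule ccontr)
    assume "\<not> ?thesis"
    then have le: "L s k \<le> int (k0L s i)" by simp
    show False
    proof (cases "k0L s i = 0")
      case False
      have "L s k \<le> L s (k0L s i)" using C[of "k0L s i" k] k i le False by simp
      then show False using k1 Lk by (simp add: L_def)
    next
      case True
      then show False using le Lk L0 by simp
    qed
  qed
qed

lemma vert_RL:
  assumes x: "isvert s x" and i: "1 \<le> i" "i < n"
  shows "R x i \<le> R s i \<and> L s i \<le> L x i \<and>
    (R x i = R s i \<or> (s!(i-1) > 0 \<and> R x i = int (k0R s i) - 1)) \<and>
    (L x i = L s i \<or> (s!(i-1) < 0 \<and> L x i = int (k0L s i) + 1))"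
proof -
  have lx: "length x = n - 1" using x lens by (simp add: isvert_def)
  have xi: "x!(i-1) = lo_at s i \<or> x!(i-1) = hi_at s i" using x i lens by (simp add: isvert_def)
  have Px: "P x i = max (x!(i-1)) 0" and Qx: "Q x i = max (- x!(i-1)) 0"
    using i lx by (auto simp: P_def Q_def)
  have Ps: "P s i = max (s!(i-1)) 0" and Qs: "Q s i = max (- s!(i-1)) 0"
    using i lens by (auto simp: P_def Q_def)
  show ?thesis
  proof (cases "s!(i-1) > 0")
    case True
    note kp = k0R_props[OF i True]
    have lo: "lo_at s i = int (k0R s i) - 1 - int i" using True by (simp add: lo_at_def)
    have hi: "hi_at s i = s!(i-1)" using True by (simp add: hi_at_def)
    have "0 \<le> lo_at s i" using lo kp(1) by simp
    then show ?thesis using xi lo hi True kp(3) Px Qx Ps Qs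
      by (auto simp: R_def L_def)
  next
    case False
    then have neg: "s!(i-1) < 0" using sync[OF i] by simp
    note kp = k0L_props[OF i neg]
    have lo: "lo_at s i = s!(i-1)" using neg by (simp add: lo_at_def)
    have hi: "hi_at s i = int (k0L s i) + 1 - int i" using neg by (simp add: hi_at_def)
    have "hi_at s i \<le> 0" using hi kp(1) by simp
    then show ?thesis using xi lo hi neg kp(3) Px Qx Ps Qs
      by (auto simp: R_def L_def)
  qed
qed

lemma vert_ARC:
  assumes x: "isvert s x"
  shows "ARC n x"
  unfolding ARC_def
proof (intro conjI allI impI)
  fix i assume i: "1 \<le> i \<and> i < n"
  have "R x i \<le> R s i" "L s i \<le> L x i" using vert_RL[OF x] i by auto
  then show "int i + P x i \<le> int n"
    using A[of i] i by (auto simp: R_def L_def)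
next
  fix i assume i: "1 \<le> i \<and> i < n"
  have "R x i \<le> R s i" "L s i \<le> L x i" using vert_RL[OF x] i by auto
  then show "Q x i \<le> int i"
    using A[of i] i by (auto simp: R_def L_def)
next
  fix i k assume h: "1 \<le> i \<and> i < k \<and> k < n \<and> int k \<le> R x i"
  have k1: "1 \<le> k" "k < n" using h by auto
  have Rk: "R x k \<le> R s k" using vert_RL[OF x k1] by auto
  have ri: "R x i \<le> R s i \<and> (R x i = R s i \<or> (s!(i-1) > 0 \<and> R x i = int (k0R s i) - 1))"
    using vert_RL[OF x] h by auto
  show "R x k \<le> R x i"
  proof (cases "R x i = R s i")
    case True
    then show ?thesis using B[of i k] h Rk by simp
  next
    case False
    then have sp: "s!(i-1) > 0" and eq: "R x i = int (k0R s i) - 1" using ri by auto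
    have "R s k < int (k0R s i)" using k0R_props(4)[of i k] sp h eq by auto
    then show ?thesis using Rk eq by simp
  qed
next
  fix i k assume h: "1 \<le> k \<and> k < i \<and> i < n \<and> L x i \<le> int k"
  have i1: "1 \<le> i" "i < n" using h by auto
  have k1: "1 \<le> k" "k < n" using h by auto
  have Lk: "L s k \<le> L x k" using vert_RL[OF x k1] by auto
  have li: "L s i \<le> L x i \<and> (L x i = L s i \<or> (s!(i-1) < 0 \<and> L x i = int (k0L s i) + 1))"
    using vert_RL[OF x i1] by auto
  show "L x i \<le> L x k"
  proof (cases "L x i = L s i")
    case True
    then show ?thesis using C[of k i] h Lk by simp
  next
    case False
    then have sn: "s!(i-1) < 0" and eq: "L x i = int (k0L s i) + 1" using li by auto
    have "int (k0L s i) < L s k" using k0L_props(4)[OF i1 sn, of k] h eq by auto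
    then show ?thesis using Lk eq by simp
  qed
next
  fix i k assume h: "1 \<le> i \<and> i < k \<and> k < n \<and> int k < R x i"
  have i1: "1 \<le> i" "i < n" using h by auto
  have k1: "1 \<le> k" "k < n" using h by auto
  have "R x i \<le> R s i" using vert_RL[OF x i1] by auto
  moreover have "L s k \<le> L x k" using vert_RL[OF x k1] by auto
  ultimately show "int i \<le> L x k" using D[of i k] h by force
qed

lemma vert_CC: "isvert s x \<Longrightarrow> x \<in> CC n"
  using vert_ARC ARC_imp_CC[OF n1] lens by (auto simp: isvert_def)

lemma vert_nth: "1 \<le> i \<Longrightarrow> i < n \<Longrightarrow> vert s j ! (i-1) = (if i < j then lo_at s i else hi_at s i)"
proof -
  assume i: "1 \<le> i" "i < n"
  have "i - 1 < length [1..<length s + 1]" using lens i by simp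
  moreover have "[1..<length s + 1] ! (i-1) = i" using lens i by (simp add: nth_upt)
  ultimately show ?thesis by (simp add: vert_def)
qed

lemma len_vert0: "length (vert s j) = length s" unfolding vert_def by (simp only: length_map length_upt add_diff_cancel_right)
lemma len_vert: "length (vert s j) = n - 1" using lens len_vert0 by simp

lemma vert_isvert: "isvert s (vert s j)"
  unfolding isvert_def
proof (intro conjI allI impI)
  show "length (vert s j) = length s" using len_vert lens by simp
  fix i assume i: "1 \<le> i \<and> i \<le> length s"
  then have "1 \<le> i" "i < n" using lens by auto
  then show "vert s j ! (i - 1) = lo_at s i \<or> vert s j ! (i - 1) = hi_at s i"
    using vert_nth by simp
qed

end


lemma P_in: "length x = n - 1 \<Longrightarrow> 1 \<le> k \<Longrightarrow> k < n \<Longrightarrow> P x k = max (x!(k-1)) 0"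
  by (auto simp: P_def)
lemma Q_in: "length x = n - 1 \<Longrightarrow> 1 \<le> k \<Longrightarrow> k < n \<Longrightarrow> Q x k = max (- x!(k-1)) 0"
  by (auto simp: Q_def)

context sctx begin

lemma lo_lt_hi: assumes i: "1 \<le> i" "i < n" shows "lo_at s i < hi_at s i"
proof (cases "s!(i-1) > 0")
  case True
  then show ?thesis using k0R_props[OF i True] pos_R[OF i True] by (simp add: lo_at_def hi_at_def)
next
  case False
  then have neg: "s!(i-1) < 0" using sync[OF i] by simp
  then show ?thesis using k0L_props[OF i neg] neg_L[OF i neg] by (simp add: lo_at_def hi_at_def)
qed

lemma lo_nonneg: assumes i: "1 \<le> i" "i < n" and sp: "s!(i-1) > 0" shows "0 \<le> lo_at s i"
  using k0R_props[OF i sp] sp by (simp add: lo_at_def)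

lemma tight:
  assumes i: "1 \<le> i" "i < n" and t: "lo_at s i < t" "t < hi_at s i"
  shows "(vert s (i+1))[i-1 := t] \<notin> CC n"
proof
  define y where "y = (vert s (i+1))[i-1 := t]"
  assume "(vert s (i+1))[i-1 := t] \<in> CC n"
  then have "ARC n y" using CC_imp_ARC[OF n1] y_def by blast
  then have By: "\<And>i k. 1 \<le> i \<Longrightarrow> i < k \<Longrightarrow> k < n \<Longrightarrow> int k \<le> R y i \<Longrightarrow> R y k \<le> R y i"
    and Cy: "\<And>i k. 1 \<le> k \<Longrightarrow> k < i \<Longrightarrow> i < n \<Longrightarrow> L y i \<le> int k \<Longrightarrow> L y i \<le> L y k"
    unfolding ARC_def by blast+
  have lv: "length (vert s (i+1)) = n - 1" by (rule len_vert)
  have ily: "i \<le> length (vert s (i+1))" using lv i by simp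
  have ly: "length y = n - 1" using lv y_def by simp
  have yk: "y!(k-1) = vert s (i+1) ! (k-1)" if "1 \<le> k" "k < n" "k \<noteq> i" for k
  proof -
    have "k - 1 \<noteq> i - 1" using that i by simp
    then show ?thesis using y_def by simp
  qed
  have Pyk: "\<And>k. 1 \<le> k \<Longrightarrow> k < n \<Longrightarrow> P y k = max (y!(k-1)) 0"
    using ly by (auto simp: P_def)
  have Qyk: "\<And>k. 1 \<le> k \<Longrightarrow> k < n \<Longrightarrow> Q y k = max (- y!(k-1)) 0"
    using ly by (auto simp: Q_def)
  have yi: "y!(i-1) = t" using y_def ily i by simp
  show False
  proof (cases "s!(i-1) > 0")
    case True
    note kp = k0R_props[OF i True]
    define k0 where "k0 = k0R s i"
    have lo: "lo_at s i = int k0 - 1 - int i" using True by (simp add: lo_at_def k0_def)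
    have hi: "hi_at s i = s!(i-1)" using True by (simp add: hi_at_def)
    have Rs: "R s i = int i + s!(i-1)" using pos_R[OF i True] by simp
    have t0: "t > 0" using t lo kp(1) k0_def by simp
    have Ryi: "R y i = int i + t" using Pyk[OF i] yi t0 by (simp add: R_def)
    have k0le: "int k0 \<le> R y i" using Ryi t lo by simp
    have k0lt: "int k0 < R s i" using Ryi t hi Rs k0le by simp
    have k0n: "k0 < n" using k0lt A[OF i] by (simp add: R_def)
    have ik0: "i < k0" using kp(1) k0_def by simp
    have Psk0: "P s k0 = R s i - int k0" using kp(2) k0_def by simp
    have Psk0': "P s k0 = max (s!(k0-1)) 0" using P_in[OF lens, of k0] k0n ik0 i by simp
    have spk0: "s!(k0-1) > 0" using Psk0 Psk0' k0lt by simp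
    have yk0: "y!(k0-1) = s!(k0-1)"
      using yk[of k0] ik0 k0n vert_nth[of k0 "i+1"] spk0 by (simp add: hi_at_def)
    have Ryk0: "R y k0 = R s i"
      using Pyk[of k0] ik0 k0n yk0 spk0 Psk0 Psk0' by (simp add: R_def)
    have "R y k0 \<le> R y i" using By[of i k0] i ik0 k0n k0le by simp
    then show False using Ryk0 Ryi t hi Rs by simp
  next
    case False
    then have neg: "s!(i-1) < 0" using sync[OF i] by simp
    note kp = k0L_props[OF i neg]
    define k0 where "k0 = k0L s i"
    have lo: "lo_at s i = s!(i-1)" using neg by (simp add: lo_at_def)
    have hi: "hi_at s i = int k0 + 1 - int i" using neg by (simp add: hi_at_def k0_def)
    have Ls: "L s i = int i + s!(i-1)" using neg_L[OF i neg] by simp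
    have t0: "t < 0" using t hi kp(1) k0_def by simp
    have Lyi: "L y i = int i + t" using Qyk[OF i] yi t0 by (simp add: L_def)
    have k0le: "L y i \<le> int k0" using Lyi t hi by simp
    have k0lt: "L s i < L y i" using Lyi t lo Ls by simp
    have Ls0: "0 \<le> L s i" using A[OF i] by (simp add: L_def)
    have k01: "1 \<le> k0" using k0lt k0le Ls0 by simp
    have ik0: "k0 < i" using kp(1) k0_def by simp
    have Qsk0: "Q s k0 = int k0 - L s i" using kp(2) k0_def by simp
    have Qsk0': "Q s k0 = max (- s!(k0-1)) 0" using Q_in[OF lens, of k0] k01 ik0 i by simp
    have snk0: "s!(k0-1) < 0" using Qsk0 Qsk0' k0lt k0le by simp
    have yk0: "y!(k0-1) = s!(k0-1)"
      using yk[of k0] ik0 k01 i vert_nth[of k0 "i+1"] snk0 by (simp add: lo_at_def)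
    have Lyk0: "L y k0 = L s i"
      using Qyk[of k0] ik0 k01 i yk0 snk0 Qsk0 Qsk0' by (simp add: L_def)
    have "L y i \<le> L y k0" using Cy[of k0 i] i ik0 k01 k0le by simp
    then show False using Lyk0 k0lt by simp
  qed
qed

lemma vert_upd: assumes i: "1 \<le> i" "i < n"
  shows "(vert s (i+1))[i-1 := hi_at s i] = vert s i"
proof (rule nth_equalityI)
  show "length ((vert s (i+1))[i-1 := hi_at s i]) = length (vert s i)" using len_vert by simp
  fix idx assume "idx < length ((vert s (i+1))[i-1 := hi_at s i])"
  then have idx: "idx < n - 1" using len_vert by simp
  have k: "1 \<le> idx + 1" "idx + 1 < n" using idx by auto
  show "(vert s (i+1))[i-1 := hi_at s i] ! idx = vert s i ! idx"
    using vert_nth[OF k, of "i+1"] vert_nth[OF k, of i] idx len_vert i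
    by (cases "idx = i - 1") auto
qed

lemma min_inc: assumes i: "1 \<le> i" "i < n"
  shows "min_increase n i (vert s (i+1)) = vert s i"
proof -
  have e: "vert s (i+1) ! (i-1) = lo_at s i" using vert_nth[OF i] by simp
  have "(LEAST t. t > vert s (i+1) ! (i-1) \<and> (vert s (i+1))[i-1 := t] \<in> CC n) = hi_at s i"
  proof (rule Least_equality)
    show "hi_at s i > vert s (i+1) ! (i-1) \<and> (vert s (i+1))[i-1 := hi_at s i] \<in> CC n"
      using e lo_lt_hi[OF i] vert_upd[OF i] vert_CC vert_isvert by simp
  next
    fix y assume "y > vert s (i+1) ! (i-1) \<and> (vert s (i+1))[i-1 := y] \<in> CC n"
    then show "hi_at s i \<le> y" using tight[OF i, of y] e by force
  qed
  then show ?thesis unfolding min_increase_def using vert_upd[OF i] by simp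
qed

lemma fold_vert: "1 \<le> j \<Longrightarrow> j \<le> n \<Longrightarrow> foldr (min_increase n) [j..<n] (vert s n) = vert s j"
proof (induction "n - j" arbitrary: j)
  case 0
  then have "j = n" by simp
  then show ?case by simp
next
  case (Suc d)
  then have jn: "j < n" by simp
  have "[j..<n] = j # [Suc j..<n]" using jn by (simp add: upt_conv_Cons)
  then have "foldr (min_increase n) [j..<n] (vert s n) = min_increase n j (foldr (min_increase n) [Suc j..<n] (vert s n))"
    by simp
  also have "foldr (min_increase n) [Suc j..<n] (vert s n) = vert s (j+1)"
    using Suc.hyps(1)[of "Suc j"] Suc.hyps(2) Suc.prems jn by simp
  also have "min_increase n j (vert s (j+1)) = vert s j" using min_inc Suc.prems jn by simp
  finally show ?case .
qed

lemma maxcorr_vert: "max_correspondent n (vert s n) = vert s 1"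
  unfolding max_correspondent_def using fold_vert[of 1] n1 by simp

lemma isvert_upd: assumes x: "isvert s x" and i: "1 \<le> i" "i < n"
  shows "isvert s (x[i-1 := hi_at s i])"
  unfolding isvert_def
proof (intro conjI allI impI)
  show "length (x[i-1 := hi_at s i]) = length s" using x by (simp add: isvert_def)
  fix k assume k: "1 \<le> k \<and> k \<le> length s"
  show "x[i-1 := hi_at s i] ! (k - 1) = lo_at s k \<or> x[i-1 := hi_at s i] ! (k - 1) = hi_at s k"
  proof (cases "k = i")
    case True
    then show ?thesis using x i lens by (simp add: isvert_def)
  next
    case False
    then have "k - 1 \<noteq> i - 1" using k i by auto
    then show ?thesis using x k by (simp add: isvert_def)
  qed
qed

lemma mincell_vert: "minimal_cellular n (vert s n)"
  unfolding minimal_cellular_def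
proof (intro conjI ballI)
  show "vert s n \<in> CC n" using vert_CC vert_isvert by simp
  fix i assume "i \<in> {1..n-1}"
  then have i: "1 \<le> i" "i < n" by auto
  have "vert s n ! (i-1) = lo_at s i" using vert_nth[OF i] i by simp
  then show "up_defined n i (vert s n)" unfolding up_defined_def
  proof -
    assume e: "vert s n ! (i-1) = lo_at s i"
    have "hi_at s i > vert s n ! (i-1)" using e lo_lt_hi[OF i] by simp
    moreover have "(vert s n)[i-1 := hi_at s i] \<in> CC n"
      using isvert_upd[OF vert_isvert i] vert_CC by simp
    ultimately show "\<exists>t>vert s n ! (i - 1). (vert s n)[i - 1 := t] \<in> CC n" by blast
  qed
qed

lemma Gamma_nth: "idx < length a \<Longrightarrow> idx < length b \<Longrightarrow> Gamma (a, b) ! idx = gamma (a!idx) (b!idx)"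
  unfolding Gamma_def by simp
lemma Gamma_len: "length (Gamma (a, b)) = min (length a) (length b)"
  unfolding Gamma_def by simp

lemma Gamma_vert: "Gamma (vert s n, vert s 1) = s"
proof (rule nth_equalityI)
  show "length (Gamma (vert s n, vert s 1)) = length s" using len_vert lens Gamma_len by simp
  fix idx assume "idx < length (Gamma (vert s n, vert s 1))"
  then have idx: "idx < n - 1" using len_vert Gamma_len by simp
  have k: "1 \<le> idx + 1" "idx + 1 < n" using idx by auto
  have "Gamma (vert s n, vert s 1) ! idx = gamma (vert s n ! idx) (vert s 1 ! idx)"
    using Gamma_nth idx len_vert by simp
  moreover have "vert s n ! idx = lo_at s (idx+1)" using vert_nth[OF k, of n] k by simp
  moreover have "vert s 1 ! idx = hi_at s (idx+1)" using vert_nth[OF k, of 1] by simp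
  ultimately have g: "Gamma (vert s n, vert s 1) ! idx = gamma (lo_at s (idx+1)) (hi_at s (idx+1))" by simp
  show "Gamma (vert s n, vert s 1) ! idx = s ! idx"
  proof (cases "s!idx > 0")
    case True
    then show ?thesis using g lo_nonneg[OF k] by (simp add: gamma_def hi_at_def)
  next
    case False
    then have "s!idx < 0" using sync[OF k] by simp
    then show ?thesis using g by (simp add: gamma_def lo_at_def)
  qed
qed

end



function T :: "int list \<Rightarrow> nat \<Rightarrow> nat" where
  "T c j = (if j = 0 \<or> length c < j then j else if c!(j-1) < 0 then j else T c (nat (R c j) + 1))"
  by pat_completeness auto
termination
proof (relation "measure (\<lambda>(c,j). Suc (length c) - j)")
  show "wf (measure (\<lambda>(c,j). Suc (length c) - j))" by simp
  fix c :: "int list" and j :: nat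
  assume h: "\<not> (j = 0 \<or> length c < j)" "\<not> c ! (j - 1) < 0"
  have "R c j \<ge> int j" using P_ge0[of c j] by (simp add: R_def)
  then have g: "nat (R c j) + 1 > j" by linarith
  have "Suc (length c) - (nat (R c j) + 1) < Suc (length c) - j" using h g by arith
  then show "((c, nat (R c j) + 1), c, j) \<in> measure (\<lambda>(c,j). Suc (length c) - j)"
    by simp
qed

declare T.simps[simp del]

definition TT :: "int list \<Rightarrow> nat \<Rightarrow> nat" where
  "TT c i = T c (nat (R c i) + 1)"

definition S :: "int list \<Rightarrow> int list" where
  "S c = map (\<lambda>i. if c!(i-1) < 0 then c!(i-1) else int (TT c i) - int i) [1..<length c + 1]"

locale mctx =
  fixes n :: nat and c :: "int list"
  assumes n1: "n \<ge> 1" and lenc: "length c = n - 1" and arc: "ARC n c"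
    and mc: "\<And>i. 1 \<le> i \<Longrightarrow> i < n \<Longrightarrow> c!(i-1) \<ge> 0 \<Longrightarrow> \<exists>t > c!(i-1). c[i-1 := t] \<in> CC n"
begin

lemma A: "1 \<le> i \<Longrightarrow> i < n \<Longrightarrow> int i + P c i \<le> int n \<and> Q c i \<le> int i"
  using arc unfolding ARC_def by blast
lemma B: "1 \<le> i \<Longrightarrow> i < k \<Longrightarrow> k < n \<Longrightarrow> int k \<le> R c i \<Longrightarrow> R c k \<le> R c i"
  using arc unfolding ARC_def by blast
lemma C: "1 \<le> k \<Longrightarrow> k < i \<Longrightarrow> i < n \<Longrightarrow> L c i \<le> int k \<Longrightarrow> L c i \<le> L c k"
  using arc unfolding ARC_def by blast
lemma D: "1 \<le> i \<Longrightarrow> i < k \<Longrightarrow> k < n \<Longrightarrow> int k < R c i \<Longrightarrow> int i \<le> L c k"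
  using arc unfolding ARC_def by blast

lemma Pc: "1 \<le> i \<Longrightarrow> i < n \<Longrightarrow> P c i = max (c!(i-1)) 0" using P_in[OF lenc] .
lemma Qc: "1 \<le> i \<Longrightarrow> i < n \<Longrightarrow> Q c i = max (- c!(i-1)) 0" using Q_in[OF lenc] .

lemma M:
  assumes i: "1 \<le> i" "i < n" and c0: "c!(i-1) \<ge> 0"
  shows "R c i < int n"
    "\<And>j. 1 \<le> j \<Longrightarrow> j < i \<Longrightarrow> int i \<le> R c j \<Longrightarrow> R c i < R c j"
    "R c i > int i \<Longrightarrow> int i \<le> L c (nat (R c i))"
proof -
  obtain t where t: "t > c!(i-1)" "c[i-1 := t] \<in> CC n" using mc[OF i c0] by blast
  define y where "y = c[i-1 := t]"
  have ay: "ARC n y" using CC_imp_ARC[OF n1] t y_def by blast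
  have ily: "1 \<le> i" "i \<le> length c" using i lenc by auto
  have Py: "\<And>k. P y k = (if k = i then max t 0 else P c k)" using P_upd[OF ily] y_def by simp
  have Qy: "\<And>k. Q y k = (if k = i then max (-t) 0 else Q c k)" using Q_upd[OF ily] y_def by simp
  have t0: "t > 0" using t c0 by simp
  have Rci: "R c i = int i + c!(i-1)" using Pc[OF i] c0 by (simp add: R_def)
  have Ryi: "R y i = int i + t" using Py t0 by (simp add: R_def)
  have Ay: "int i + P y i \<le> int n" using ay i unfolding ARC_def by blast
  show M3: "R c i < int n" using Ay Py t0 Rci t by simp
  fix j assume j: "1 \<le> j" "j < i" "int i \<le> R c j"
  have "R y j = R c j" using Py j by (simp add: R_def)
  have By: "\<And>a b. 1 \<le> a \<Longrightarrow> a < b \<Longrightarrow> b < n \<Longrightarrow> int b \<le> R y a \<Longrightarrow> R y b \<le> R y a"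
    using ay unfolding ARC_def by blast
  have "R y i \<le> R y j" using By[of j i] j i \<open>R y j = R c j\<close> by simp
  then show "R c i < R c j" using Ryi Rci t \<open>R y j = R c j\<close> by simp
next
  obtain t where t: "t > c!(i-1)" "c[i-1 := t] \<in> CC n" using mc[OF i c0] by blast
  define y where "y = c[i-1 := t]"
  have ay: "ARC n y" using CC_imp_ARC[OF n1] t y_def by blast
  have ily: "1 \<le> i" "i \<le> length c" using i lenc by auto
  have Py: "\<And>k. P y k = (if k = i then max t 0 else P c k)" using P_upd[OF ily] y_def by simp
  have Qy: "\<And>k. Q y k = (if k = i then max (-t) 0 else Q c k)" using Q_upd[OF ily] y_def by simp
  have t0: "t > 0" using t c0 by simp
  have Rci: "R c i = int i + c!(i-1)" using Pc[OF i] c0 by (simp add: R_def)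
  have Ryi: "R y i = int i + t" using Py t0 by (simp add: R_def)
  have Ay: "int i + P y i \<le> int n" using ay i unfolding ARC_def by blast
  assume gt: "R c i > int i"
  define k where "k = nat (R c i)"
  have kR: "int k = R c i" using gt k_def by simp
  have ik: "i < k" using kR gt by simp
  have kn: "k < n" using kR Ay Py t0 Rci t by simp
  have "int k < R y i" using kR Ryi Rci t by simp
  then have "int i \<le> L y k" using ay i ik kn unfolding ARC_def by blast
  moreover have "L y k = L c k" using Qy ik by (simp add: L_def)
  ultimately show "int i \<le> L c (nat (R c i))" using k_def by simp
qed

lemma T_stop1: "j \<ge> n \<Longrightarrow> T c j = j"
  using lenc n1 by (subst T.simps) auto
lemma T_stop2: "1 \<le> j \<Longrightarrow> j < n \<Longrightarrow> c!(j-1) < 0 \<Longrightarrow> T c j = j"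
  by (subst T.simps) auto
lemma T_step: "1 \<le> j \<Longrightarrow> j < n \<Longrightarrow> c!(j-1) \<ge> 0 \<Longrightarrow> T c j = T c (nat (R c j) + 1)"
  using lenc by (subst T.simps) auto

lemma Rval: assumes "1 \<le> j" "j < n" "c!(j-1) \<ge> 0" shows "R c j = int j + c!(j-1)"
  using Pc[of j] assms by (simp add: R_def)

lemma Rnext: assumes "1 \<le> j" "j < n" "c!(j-1) \<ge> 0"
  shows "j < nat (R c j) + 1" "nat (R c j) + 1 \<le> n" "int (nat (R c j)) = R c j"
proof -
  have R: "R c j = int j + c!(j-1)" using Rval[OF assms] .
  then show "j < nat (R c j) + 1" using assms by simp
  show "nat (R c j) + 1 \<le> n" using M(1)[OF assms] R assms by simp
  show "int (nat (R c j)) = R c j" using R assms by simp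
qed

lemma T1: "1 \<le> j \<Longrightarrow> j \<le> n \<Longrightarrow> j \<le> T c j \<and> T c j \<le> n"
proof (induction "n - j" arbitrary: j rule: less_induct)
  case less
  show ?case
  proof (cases "j = n")
    case True then show ?thesis using T_stop1 by simp
  next
    case False
    then have jn: "j < n" using less.prems by simp
    show ?thesis
    proof (cases "c!(j-1) < 0")
      case True then show ?thesis using T_stop2 less.prems jn by simp
    next
      case False
      then have c0: "c!(j-1) \<ge> 0" by simp
      note rn = Rnext[OF less.prems(1) jn c0]
      have "nat (R c j) + 1 \<le> T c (nat (R c j) + 1) \<and> T c (nat (R c j) + 1) \<le> n"
        using less.hyps[of "nat (R c j) + 1"] rn by simp
      then show ?thesis using T_step[OF less.prems(1) jn c0] rn by simp
    qed
  qed
qed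

lemma T3: "1 \<le> j \<Longrightarrow> j < n \<Longrightarrow> c!(j-1) \<ge> 0 \<Longrightarrow> j < k \<Longrightarrow> int k \<le> R c j \<Longrightarrow> int (T c k) \<le> R c j"
proof (induction "n - k" arbitrary: k rule: less_induct)
  case less
  have kn: "k < n" using M(1)[OF less.prems(1-3)] less.prems by simp
  have k1: "1 \<le> k" using less.prems by simp
  show ?case
  proof (cases "c!(k-1) < 0")
    case True then show ?thesis using T_stop2[OF k1 kn] less.prems by simp
  next
    case False
    then have c0: "c!(k-1) \<ge> 0" by simp
    note rn = Rnext[OF k1 kn c0]
    have "R c k < R c j" using M(2)[OF k1 kn c0, of j] less.prems by simp
    then have a: "int (nat (R c k) + 1) \<le> R c j" using rn(3) by simp
    have b: "j < nat (R c k) + 1" using rn(1) less.prems(4) by linarith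
    have "n - (nat (R c k) + 1) < n - k" using rn(1) kn by simp
    then have "int (T c (nat (R c k) + 1)) \<le> R c j"
      using less.hyps[of "nat (R c k) + 1"] less.prems(1-3) a b by blast
    then show ?thesis using T_step[OF k1 kn c0] by simp
  qed
qed

lemma TT3: assumes "1 \<le> j" "j < n" "c!(j-1) \<ge> 0" "j < k" "int k \<le> R c j" "c!(k-1) \<ge> 0"
  shows "int (TT c k) \<le> R c j"
proof -
  have kn: "k < n" using M(1)[OF assms(1-3)] assms by simp
  have k1: "1 \<le> k" using assms by simp
  note rn = Rnext[OF k1 kn assms(6)]
  have "R c k < R c j" using M(2)[OF k1 kn assms(6), of j] assms by simp
  then have a: "int (nat (R c k) + 1) \<le> R c j" using rn(3) by simp
  have b: "j < nat (R c k) + 1" using rn(1) assms(4) by linarith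
  show ?thesis unfolding TT_def using T3[OF assms(1-3) b a] .
qed

lemma T4: "1 \<le> j \<Longrightarrow> j \<le> n \<Longrightarrow> j \<le> k \<Longrightarrow> k < n \<Longrightarrow> c!(k-1) \<ge> 0 \<Longrightarrow> k \<le> T c j \<Longrightarrow> TT c k \<le> T c j"
proof (induction "n - j" arbitrary: j rule: less_induct)
  case less
  have jn: "j < n" using less.prems by simp
  show ?case
  proof (cases "c!(j-1) < 0")
    case True
    then have "T c j = j" using T_stop2 less.prems jn by simp
    then have "k = j" using less.prems by simp
    then show ?thesis using True less.prems by simp
  next
    case False
    then have c0: "c!(j-1) \<ge> 0" by simp
    note rn = Rnext[OF less.prems(1) jn c0]
    have Tj: "T c j = T c (nat (R c j) + 1)" using T_step[OF less.prems(1) jn c0] .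
    show ?thesis
    proof (cases "k = j")
      case True then show ?thesis using Tj by (simp add: TT_def)
    next
      case False
      show ?thesis
      proof (cases "int k \<le> R c j")
        case True
        then have "int (TT c k) \<le> R c j" using TT3[OF less.prems(1) jn c0, of k] False less.prems by simp
        moreover have "nat (R c j) + 1 \<le> T c (nat (R c j) + 1)" using T1[of "nat (R c j) + 1"] rn by simp
        ultimately have "int (TT c k) \<le> int (T c (nat (R c j) + 1))" using rn(3) by linarith
        then show ?thesis using Tj by simp
      next
        case False
        then have "int (nat (R c j)) < int k" using rn(3) by linarith
        then have "nat (R c j) + 1 \<le> k" by linarith
        then show ?thesis using less.hyps[of "nat (R c j) + 1"] rn less.prems Tj by simp
      qed
    qed
  qed
qed

lemma T5: "1 \<le> j \<Longrightarrow> j \<le> n \<Longrightarrow> j \<le> k \<Longrightarrow> k < T c j \<Longrightarrow> k < n \<Longrightarrow> c!(k-1) < 0 \<Longrightarrow> int j \<le> L c k"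
proof (induction "n - j" arbitrary: j rule: less_induct)
  case less
  have jn: "j < n" using less.prems by simp
  show ?case
  proof (cases "c!(j-1) < 0")
    case True
    then have "T c j = j" using T_stop2 less.prems jn by simp
    then show ?thesis using less.prems by simp
  next
    case False
    then have c0: "c!(j-1) \<ge> 0" by simp
    note rn = Rnext[OF less.prems(1) jn c0]
    have Tj: "T c j = T c (nat (R c j) + 1)" using T_step[OF less.prems(1) jn c0] .
    have kj: "j < k" using less.prems c0 False by (cases "k = j") auto
    show ?thesis
    proof (cases "int k < R c j")
      case True
      then show ?thesis using D[of j k] less.prems kj by simp
    next
      case False
      show ?thesis
      proof (cases "int k = R c j")
        case True
        then have "R c j > int j" using kj by simp
        then have "int j \<le> L c (nat (R c j))" using M(3)[OF less.prems(1) jn c0] by simp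
        moreover have "nat (R c j) = k" using True by simp
        ultimately show ?thesis by simp
      next
        case False
        then have "int (nat (R c j)) < int k" using rn(3) \<open>\<not> int k < R c j\<close> by linarith
        then have "nat (R c j) + 1 \<le> k" by linarith
        then have "int (nat (R c j) + 1) \<le> L c k" using less.hyps[of "nat (R c j) + 1"] rn less.prems Tj by simp
        moreover have "int j \<le> R c j" using rn(1) rn(3) by linarith
        ultimately show ?thesis by simp
      qed
    qed
  qed
qed

lemma lenS0: "length (S c) = length c"
  unfolding S_def by (simp only: length_map length_upt add_diff_cancel_right)
lemma lenS: "length (S c) = n - 1" using lenS0 lenc by simp

lemma S_nth: assumes "1 \<le> i" "i < n"
  shows "S c ! (i-1) = (if c!(i-1) < 0 then c!(i-1) else int (TT c i) - int i)"
proof -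
  have "i - 1 < length [1..<length c + 1]" using lenc assms by simp
  moreover have "[1..<length c + 1] ! (i-1) = i" using lenc assms by (simp add: nth_upt)
  ultimately show ?thesis by (simp add: S_def)
qed

lemma TT_bd: assumes "1 \<le> i" "i < n" "c!(i-1) \<ge> 0"
  shows "int (TT c i) > R c i" "TT c i \<le> n"
proof -
  note rn = Rnext[OF assms]
  have "nat (R c i) + 1 \<le> T c (nat (R c i) + 1) \<and> T c (nat (R c i) + 1) \<le> n"
    using T1[of "nat (R c i) + 1"] rn by simp
  then show "int (TT c i) > R c i" "TT c i \<le> n" using rn(3) unfolding TT_def by linarith+
qed

lemma RS: assumes "1 \<le> i" "i < n"
  shows "R (S c) i = (if c!(i-1) < 0 then int i else int (TT c i))"
proof (cases "c!(i-1) < 0")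
  case True
  then show ?thesis using S_nth[OF assms] P_in[OF lenS assms] by (simp add: R_def)
next
  case False
  then have "int (TT c i) > int i" using TT_bd[OF assms] Rval[OF assms] by simp
  then show ?thesis using False S_nth[OF assms] P_in[OF lenS assms] by (simp add: R_def)
qed

lemma QS: "Q (S c) i = Q c i"
proof (cases "1 \<le> i \<and> i < n")
  case True
  then have i: "1 \<le> i" "i < n" by auto
  show ?thesis
  proof (cases "c!(i-1) < 0")
    case True
    then show ?thesis using S_nth[OF i] Q_in[OF lenS i] Q_in[OF lenc i] by simp
  next
    case False
    then have "int (TT c i) > int i" using TT_bd[OF i] Rval[OF i] by simp
    then show ?thesis using False S_nth[OF i] Q_in[OF lenS i] Q_in[OF lenc i] by simp
  qed
next
  case False
  then show ?thesis using lenS lenc by (auto simp: Q_def)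
qed

lemma LS: "L (S c) i = L c i" using QS by (simp add: L_def)

lemma ARC_S: "ARC n (S c)"
  unfolding ARC_def
proof (intro conjI allI impI)
  fix i assume "1 \<le> i \<and> i < n"
  then have i: "1 \<le> i" "i < n" by auto
  show "int i + P (S c) i \<le> int n"
  proof (cases "c!(i-1) < 0")
    case True then show ?thesis using RS[OF i] i by (simp add: R_def)
  next
    case False then show ?thesis using RS[OF i] TT_bd[OF i] by (simp add: R_def)
  qed
  show "Q (S c) i \<le> int i" using QS A[OF i] by simp
next
  fix i k assume h: "1 \<le> i \<and> i < k \<and> k < n \<and> int k \<le> R (S c) i"
  then have i: "1 \<le> i" "i < n" and k: "1 \<le> k" "k < n" and ik: "i < k" and kR: "int k \<le> R (S c) i" by auto
  show "R (S c) k \<le> R (S c) i"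
  proof (cases "c!(i-1) < 0")
    case True
    then show ?thesis using RS[OF i] kR ik by simp
  next
    case False
    then have ci: "c!(i-1) \<ge> 0" by simp
    have RSi: "R (S c) i = int (TT c i)" using RS[OF i] False by simp
    show ?thesis
    proof (cases "c!(k-1) < 0")
      case True then show ?thesis using RS[OF k] kR by simp
    next
      case False
      then have ck: "c!(k-1) \<ge> 0" by simp
      have RSk: "R (S c) k = int (TT c k)" using RS[OF k] False by simp
      note rn = Rnext[OF i ci]
      show ?thesis
      proof (cases "int k \<le> R c i")
        case True
        then have "int (TT c k) \<le> R c i" using TT3[OF i ci ik True ck] by simp
        then show ?thesis using RSk RSi TT_bd[OF i ci] by simp
      next
        case False
        then have "int (nat (R c i)) < int k" using rn(3) by linarith
        then have j: "nat (R c i) + 1 \<le> k" by linarith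
        have "k \<le> T c (nat (R c i) + 1)" using kR RSi unfolding TT_def by simp
        then have "TT c k \<le> T c (nat (R c i) + 1)"
          using T4[of "nat (R c i) + 1" k] rn j k ck by simp
        then show ?thesis using RSk RSi unfolding TT_def by simp
      qed
    qed
  qed
next
  fix i k assume h: "1 \<le> k \<and> k < i \<and> i < n \<and> L (S c) i \<le> int k"
  then show "L (S c) i \<le> L (S c) k" using C[of k i] LS by simp
next
  fix i k assume h: "1 \<le> i \<and> i < k \<and> k < n \<and> int k < R (S c) i"
  then have i: "1 \<le> i" "i < n" and k: "1 \<le> k" "k < n" and ik: "i < k" and kR: "int k < R (S c) i" by auto
  show "int i \<le> L (S c) k"
  proof (cases "c!(i-1) < 0")
    case True
    then show ?thesis using RS[OF i] kR ik by simp
  next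
    case False
    then have ci: "c!(i-1) \<ge> 0" by simp
    have RSi: "R (S c) i = int (TT c i)" using RS[OF i] False by simp
    show ?thesis
    proof (cases "c!(k-1) < 0")
      case False
      then have "L c k = int k" using Q_in[OF lenc k] by (simp add: L_def)
      then show ?thesis using LS ik by simp
    next
      case True
      then have ck: "c!(k-1) < 0" .
      note rn = Rnext[OF i ci]
      show ?thesis
      proof (cases "int k < R c i")
        case True then show ?thesis using D[OF i(1) ik k(2) True] LS by simp
      next
        case False
        show ?thesis
        proof (cases "int k = R c i")
          case True
          then have "R c i > int i" using ik by simp
          then have "int i \<le> L c (nat (R c i))" using M(3)[OF i ci] by simp
          moreover have "nat (R c i) = k" using True by simp
          ultimately show ?thesis using LS by simp
        next
          case False
          then have "int (nat (R c i)) < int k" using rn(3) \<open>\<not> int k < R c i\<close> by linarith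
          then have j: "nat (R c i) + 1 \<le> k" by linarith
          have "k < T c (nat (R c i) + 1)" using kR RSi unfolding TT_def by simp
          then have "int (nat (R c i) + 1) \<le> L c k"
            using T5[of "nat (R c i) + 1" k] rn j k ck by simp
          moreover have "int i \<le> R c i" using rn(1) rn(3) by linarith
          ultimately show ?thesis using LS rn(3) by simp
        qed
      qed
    qed
  qed
qed

lemma sync_S: "1 \<le> i \<Longrightarrow> i < n \<Longrightarrow> S c ! (i-1) \<noteq> 0"
proof -
  assume i: "1 \<le> i" "i < n"
  show ?thesis
  proof (cases "c!(i-1) < 0")
    case True then show ?thesis using S_nth[OF i] by simp
  next
    case False
    then have "int (TT c i) > int i" using TT_bd[OF i] Rval[OF i] by simp
    then show ?thesis using S_nth[OF i] False by simp
  qed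
qed

lemma sctx_S: "sctx n (S c)"
  using n1 lenS ARC_S sync_S by (unfold_locales) auto

lemma k0R_S: assumes i: "1 \<le> i" "i < n" and ci: "c!(i-1) \<ge> 0"
  shows "k0R (S c) i = nat (R c i) + 1"
proof -
  note rn = Rnext[OF i ci]
  define j1 where "j1 = nat (R c i) + 1"
  have RSi: "R (S c) i = int (T c j1)" using RS[OF i] ci j1_def by (simp add: TT_def)
  have eqR: "\<And>k. (i < k \<and> int k + P (S c) k = R (S c) i) = (i < k \<and> R (S c) k = R (S c) i)"
    by (simp add: R_def)
  have "(LEAST k. i < k \<and> R (S c) k = R (S c) i) = j1"
  proof (rule Least_equality)
    have "R (S c) j1 = int (T c j1)"
    proof (cases "j1 = n")
      case True
      then show ?thesis using T_stop1[of j1] P_out[OF _ lenS, of j1] by (simp add: R_def)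
    next
      case False
      then have j1n: "j1 < n" using rn(2) j1_def by simp
      have j11: "1 \<le> j1" using j1_def by simp
      show ?thesis
      proof (cases "c!(j1-1) < 0")
        case True then show ?thesis using RS[OF j11 j1n] T_stop2[OF j11 j1n] by simp
      next
        case False
        then show ?thesis using RS[OF j11 j1n] T_step[OF j11 j1n] by (simp add: TT_def)
      qed
    qed
    then show "i < j1 \<and> R (S c) j1 = R (S c) i" using RSi rn(1) j1_def by simp
  next
    fix y assume y: "i < y \<and> R (S c) y = R (S c) i"
    show "j1 \<le> y"
    proof (rule ccontr)
      assume "\<not> j1 \<le> y"
      then have yj: "y < j1" by simp
      then have yR: "int y \<le> R c i" using rn(3) j1_def by linarith
      have yn: "y < n" using yj rn(2) j1_def by simp
      have y1: "1 \<le> y" using y i by simp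
      have Tj: "j1 \<le> T c j1" using T1[of j1] rn(2) j1_def by simp
      show False
      proof (cases "c!(y-1) < 0")
        case True
        then have "R (S c) y = int y" using RS[OF y1 yn] by simp
        then show False using y RSi Tj yj by simp
      next
        case False
        then have "R (S c) y = int (TT c y)" using RS[OF y1 yn] by simp
        moreover have "int (TT c y) \<le> R c i" using TT3[OF i ci _ yR] y False by simp
        ultimately show False using y RSi Tj rn(3) j1_def by simp
      qed
    qed
  qed
  then show ?thesis unfolding k0R_def j1_def using eqR by simp
qed

lemma vert_S: "vert (S c) n = c"
proof (rule nth_equalityI)
  interpret sx: sctx n "S c" by (rule sctx_S)
  show "length (vert (S c) n) = length c" using sx.len_vert lenc by simp
  fix idx assume "idx < length (vert (S c) n)"
  then have idx: "idx < n - 1" using sx.len_vert by simp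
  have i: "1 \<le> idx + 1" "idx + 1 < n" using idx by auto
  have v: "vert (S c) n ! idx = lo_at (S c) (idx+1)" using sx.vert_nth[OF i, of n] i by simp
  show "vert (S c) n ! idx = c ! idx"
  proof (cases "c!idx < 0")
    case True
    then show ?thesis using v S_nth[OF i] by (simp add: lo_at_def)
  next
    case False
    then have ci: "c!(idx + 1 - 1) \<ge> 0" by simp
    have "int (TT c (idx+1)) > int (idx+1)" using TT_bd[OF i ci] Rval[OF i ci] False by simp
    then have "\<not> S c ! idx < 0" using S_nth[OF i] False by simp
    then have "lo_at (S c) (idx+1) = int (k0R (S c) (idx+1)) - 1 - int (idx+1)"
      by (simp add: lo_at_def)
    also have "\<dots> = c!idx" using k0R_S[OF i ci] Rnext(3)[OF i ci] Rval[OF i ci] False by simp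
    finally show ?thesis using v by simp
  qed
qed

end

lemma mincell_mctx: assumes n: "n \<ge> 1" and m: "minimal_cellular n cm" shows "mctx n cm"
proof -
  have cc: "cm \<in> CC n" using m by (simp add: minimal_cellular_def)
  then have la: "length cm = n - 1 \<and> ARC n cm" using CC_iff[OF n] by blast
  show ?thesis
  proof (unfold_locales)
    show "1 \<le> n" using n .
    show "length cm = n - 1" using la by simp
    show "ARC n cm" using la by simp
    fix i assume i: "1 \<le> i" "i < n"
    then have "up_defined n i cm" using m by (simp add: minimal_cellular_def)
    then show "\<exists>t>cm ! (i - 1). cm[i - 1 := t] \<in> CC n" by (simp add: up_defined_def)
  qed
qed

lemma cell_Gamma: assumes n: "n \<ge> 1" and m: "minimal_cellular n cm"
  shows "Gamma (cm, max_correspondent n cm) = S cm \<and> S cm \<in> CC_sync n \<and> vert (S cm) n = cm"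
proof -
  interpret mc: mctx n cm by (rule mincell_mctx[OF n m])
  interpret sx: sctx n "S cm" by (rule mc.sctx_S)
  have v: "vert (S cm) n = cm" by (rule mc.vert_S)
  have "Gamma (cm, max_correspondent n cm) = S cm"
    using sx.maxcorr_vert sx.Gamma_vert v by simp
  moreover have "S cm \<in> CC n" using ARC_imp_CC[OF n mc.lenS mc.ARC_S] .
  moreover have "synchronized (S cm)"
    unfolding synchronized_def
  proof
    fix x assume "x \<in> set (S cm)"
    then obtain idx where idx: "idx < length (S cm)" "x = S cm ! idx" by (auto simp: in_set_conv_nth)
    then have i: "1 \<le> idx + 1" "idx + 1 < n" using mc.lenS by auto
    show "x \<noteq> 0" using mc.sync_S[OF i] idx by simp
  qed
  ultimately show ?thesis using v by (simp add: CC_sync_def)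
qed

lemma sync_sctx: assumes n: "n \<ge> 1" and s: "s \<in> CC_sync n" shows "sctx n s"
proof -
  have cc: "s \<in> CC n" and sy: "synchronized s" using s by (auto simp: CC_sync_def)
  have la: "length s = n - 1 \<and> ARC n s" using cc CC_iff[OF n] by blast
  show ?thesis
  proof (unfold_locales)
    show "1 \<le> n" using n .
    show "length s = n - 1" using la by simp
    show "ARC n s" using la by simp
    fix i assume i: "1 \<le> i" "i < n"
    then have "s!(i-1) \<in> set s" using la by (auto intro!: nth_mem)
    then show "s!(i-1) \<noteq> 0" using sy by (auto simp: synchronized_def)
  qed
qed


lemma cells_mem: "x \<in> cells n \<longleftrightarrow> (\<exists>a. x = (a, max_correspondent n a) \<and> minimal_cellular n a)"
  unfolding cells_def by blast

theorem theorem4p8: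
  fixes n :: nat
  assumes "n \<ge> 1"
  shows "bij_betw Gamma (cells n) (CC_sync n)"
  unfolding bij_betw_def
proof
  show "inj_on Gamma (cells n)"
  proof (rule inj_onI)
    fix x y assume x: "x \<in> cells n" and y: "y \<in> cells n" and g: "Gamma x = Gamma y"
    obtain a where a: "x = (a, max_correspondent n a)" "minimal_cellular n a" using x cells_mem by blast
    obtain b where b: "y = (b, max_correspondent n b)" "minimal_cellular n b" using y cells_mem by blast
    note ca = cell_Gamma[OF assms a(2)] and cb = cell_Gamma[OF assms b(2)]
    have ga: "Gamma x = S a" using conjunct1[OF ca] a(1) by (simp only:)
    have gb: "Gamma y = S b" using conjunct1[OF cb] b(1) by (simp only:)
    have va: "vert (S a) n = a" using ca by blast
    have vb: "vert (S b) n = b" using cb by blast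
    have "S a = S b" using ga gb g by (simp only:)
    then have "a = b" using va vb by metis
    then show "x = y" using a(1) b(1) by (simp only:)
  qed
  show "Gamma ` cells n = CC_sync n"
  proof
    show "Gamma ` cells n \<subseteq> CC_sync n"
    proof
      fix z assume "z \<in> Gamma ` cells n"
      then obtain x where x: "x \<in> cells n" "z = Gamma x" by blast
      then obtain a where a: "x = (a, max_correspondent n a)" "minimal_cellular n a" using cells_mem by blast
      have "Gamma x = S a" using conjunct1[OF cell_Gamma[OF assms a(2)]] a(1) by (simp only:)
      moreover have "S a \<in> CC_sync n" using cell_Gamma[OF assms a(2)] by blast
      ultimately show "z \<in> CC_sync n" using x(2) by (simp only:)
    qed
  next
    show "CC_sync n \<subseteq> Gamma ` cells n"
    proof
      fix s assume s: "s \<in> CC_sync n"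
      interpret sx: sctx n s by (rule sync_sctx[OF assms s])
      have c: "(vert s n, max_correspondent n (vert s n)) \<in> cells n"
        using sx.mincell_vert cells_mem by blast
      have "Gamma (vert s n, max_correspondent n (vert s n)) = s"
        using sx.maxcorr_vert sx.Gamma_vert by (simp only:)
      then show "s \<in> Gamma ` cells n" using c by (metis image_eqI)
    qed
  qed
qed


end
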